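(* Let $\mathbf L=(L,\vee,\wedge,0,1)$ be a complemented lattice with $0\ne1$ and $\Phi$ an equivalence relation on $L$ having the Substitution Property with respect to $\to$. Then: (i) $\Phi$ has the Substitution Property with respect to $^+$; (ii) $[1]\Phi$ is a deductive system of $\mathbf L$; (iii) $\Phi\subseteq\Theta([1]\Phi)$.
   Context: For $a\in L$, $a^+:=\{x\in L\mid a\vee x=1,\ a\wedge x=0\}$ (the set of all complements of $a$), and $a\to b:=\{x\vee(a\wedge b)\mid x\in a^+\}$. An equivalence relation $\Phi$ on $L$ has the Substitution Property with respect to $^+$ if $(a,b)\in\Phi$ implies $a^+\times b^+\subseteq\Phi$, and with respect to $\to$ if $(a,b)\in\Phi$ implies $(a\to c)\times(b\to c)\subseteq\Phi$ for all $c\in L$. A deductive system of $\mathbf L$ is a subset $D\subseteq L$ such that $1\in D$, and whenever $a\in D$, $b\in L$ and $a\to b\subseteq D$, then $b\in D$. For a deductive system $D$, $\Theta(D):=\{(x,y)\in L^2\mid x\to y\subseteq D\text{ and }y\to x\subseteq D\}$. $[1]\Phi$ is the $\Phi$-class of $1$. *)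

theory Defs
  imports Main
begin

text \<open>Complemented lattices are modelled by the type class bounded_lattice
  (0 = bot, 1 = top) together with the explicit assumption that every element
  has a complement.\<close>

definition complemented :: "'a::bounded_lattice itself \<Rightarrow> bool" where
  "complemented _ \<longleftrightarrow> (\<forall>a::'a. \<exists>x. sup a x = top \<and> inf a x = bot)"

definition cset :: "'a::bounded_lattice \<Rightarrow> 'a set" where
  "cset a = {x. sup a x = top \<and> inf a x = bot}"

definition limp :: "'a::bounded_lattice \<Rightarrow> 'a \<Rightarrow> 'a set" where
  "limp a b = {sup x (inf a b) | x. x \<in> cset a}"

definition SP_cset :: "('a::bounded_lattice \<times> 'a) set \<Rightarrow> bool" where
  "SP_cset \<Phi> \<longleftrightarrow> (\<forall>a b. (a, b) \<in> \<Phi> \<longrightarrow> cset a \<times> cset b \<subseteq> \<Phi>)"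

definition SP_limp :: "('a::bounded_lattice \<times> 'a) set \<Rightarrow> bool" where
  "SP_limp \<Phi> \<longleftrightarrow> (\<forall>a b c. (a, b) \<in> \<Phi> \<longrightarrow> limp a c \<times> limp b c \<subseteq> \<Phi>)"

definition deductive_system :: "'a::bounded_lattice set \<Rightarrow> bool" where
  "deductive_system D \<longleftrightarrow> top \<in> D \<and> (\<forall>a b. a \<in> D \<and> limp a b \<subseteq> D \<longrightarrow> b \<in> D)"

definition Theta :: "'a::bounded_lattice set \<Rightarrow> ('a \<times> 'a) set" where
  "Theta D = {(x, y). limp x y \<subseteq> D \<and> limp y x \<subseteq> D}"

end

theory Submission
  imports Defs
begin

lemma limp_top: "limp (top::'a::bounded_lattice) b = {b}"
proof -
  have "cset (top::'a) = {bot}" unfolding cset_def by auto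
  thus ?thesis unfolding limp_def by auto
qed

lemma limp_self:
  assumes "complemented TYPE('a)"
  shows "limp (y::'a::bounded_lattice) y = {top}"
proof -
  obtain z where z: "sup y z = top" "inf y z = bot"
    using assms unfolding complemented_def by blast
  have "z \<in> cset y" using z unfolding cset_def by auto
  moreover have "\<And>w. w \<in> cset y \<Longrightarrow> sup w (inf y y) = top"
    unfolding cset_def by (auto simp: sup_commute)
  ultimately show ?thesis unfolding limp_def by force
qed

lemma limp_bot: "limp (a::'a::bounded_lattice) bot = cset a"
  unfolding limp_def by auto

lemma limp_ne:
  assumes "complemented TYPE('a)"
  shows "limp (a::'a::bounded_lattice) b \<noteq> {}"
proof -
  obtain z where z: "sup a z = top" "inf a z = bot"
    using assms unfolding complemented_def by blast
  hence "z \<in> cset a" unfolding cset_def by auto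
  thus ?thesis unfolding limp_def by auto
qed

theorem theorem6:
  fixes \<Phi> :: "('a::bounded_lattice \<times> 'a) set"
  assumes "complemented TYPE('a)"
    and "(bot::'a) \<noteq> top"
    and "equiv UNIV \<Phi>"
    and "SP_limp \<Phi>"
  shows "SP_cset \<Phi> \<and> deductive_system (\<Phi> `` {top}) \<and> \<Phi> \<subseteq> Theta (\<Phi> `` {top})"
proof -
  have sp: "\<And>a b c. (a, b) \<in> \<Phi> \<Longrightarrow> limp a c \<times> limp b c \<subseteq> \<Phi>"
    using assms(4) unfolding SP_limp_def by blast
  have refl: "\<And>x. (x, x) \<in> \<Phi>" using assms(3) unfolding equiv_def refl_on_def by blast
  have sym: "\<And>x y. (x, y) \<in> \<Phi> \<Longrightarrow> (y, x) \<in> \<Phi>"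
    using assms(3) unfolding equiv_def by (meson symE)
  have tr: "\<And>x y z. (x, y) \<in> \<Phi> \<Longrightarrow> (y, z) \<in> \<Phi> \<Longrightarrow> (x, z) \<in> \<Phi>"
    using assms(3) unfolding equiv_def by (meson transE)
  have 1: "SP_cset \<Phi>"
    unfolding SP_cset_def using sp[where c=bot] by (simp add: limp_bot)
  have 2: "deductive_system (\<Phi> `` {top})"
    unfolding deductive_system_def
  proof (intro conjI allI impI)
    show "top \<in> \<Phi> `` {top}" using refl by simp
  next
    fix a b assume h: "a \<in> \<Phi> `` {top} \<and> limp a b \<subseteq> \<Phi> `` {top}"
    hence at: "(a, top) \<in> \<Phi>" using sym by auto
    obtain y where y: "y \<in> limp a b" using limp_ne[OF assms(1)] by blast
    have "(y, b) \<in> \<Phi>" using sp[OF at, of b] y limp_top by auto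
    moreover have "(top, y) \<in> \<Phi>" using h y by auto
    ultimately show "b \<in> \<Phi> `` {top}" using tr by auto
  qed
  have 3: "\<Phi> \<subseteq> Theta (\<Phi> `` {top})"
  proof
    fix p assume p: "p \<in> \<Phi>"
    obtain x y where xy: "p = (x, y)" by fastforce
    have a: "limp x y \<subseteq> \<Phi> `` {top}"
    proof
      fix u assume u: "u \<in> limp x y"
      have yx: "(x, y) \<in> \<Phi>" using p xy by blast
      have "(u, top) \<in> \<Phi>" using sp[OF yx, of y] u limp_self[OF assms(1), of y] by blast
      thus "u \<in> \<Phi> `` {top}" using sym by blast
    qed
    have b: "limp y x \<subseteq> \<Phi> `` {top}"
    proof
      fix u assume u: "u \<in> limp y x"
      have yx: "(y, x) \<in> \<Phi>" using sym p xy by blast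
      have "(u, top) \<in> \<Phi>" using sp[OF yx, of x] u limp_self[OF assms(1), of x] by blast
      thus "u \<in> \<Phi> `` {top}" using sym by blast
    qed
    show "p \<in> Theta (\<Phi> `` {top})" using a b xy unfolding Theta_def by auto
  qed
  show ?thesis using 1 2 3 by blast
qed

end
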